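(* In the database model described in the context, let $\mathbf r=(r_1,\dots,r_N)$ satisfy $P(\mathbf{LR}_{\mathcal D}=\mathbf r)>0$, set $r_0=1$, and let $1\le i\le N$ with $0<\pi_i<1$. Then \[ \frac{P(R=i\mid \mathbf{LR}_{\mathcal D}=\mathbf r)}{P(R\ne i\mid \mathbf{LR}_{\mathcal D}=\mathbf r)}=\frac{r_i\pi_i}{\sum_{k=0,\,k\ne i}^N r_k\pi_k}, \] and, whenever the denominators are nonzero, the likelihood ratio in favour of $R=i$ is \[ \frac{P(\mathbf{LR}_{\mathcal D}=\mathbf r\mid R=i)}{P(\mathbf{LR}_{\mathcal D}=\mathbf r\mid R\ne i)}=\frac{r_i(1-\pi_i)}{\sum_{k=1,\,k\ne i}^N r_k\pi_k+\pi_0}. \]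
   Context: Let $E$ be a countable set and let $S$, $G$ be $E$-valued random variables such that for every $e\in E$, $P(S=e)>0$ implies $P(G=e)>0$. For $e\in E$ define the likelihood ratio $LR(e)=P(S=e)/P(G=e)$ if $P(G=e)>0$ and $LR(e)=0$ otherwise. Database model: fix $N\ge1$. Let $R$ be a random variable with values in $\{0,1,\dots,N\}$; we write $R\in\mathcal D$ for $R\in\{1,\dots,N\}$ and $R\notin\mathcal D$ for $R=0$. Put $\pi_i=P(R=i)$ for $1\le i\le N$, $\pi_{\mathcal D}=\sum_{i=1}^N\pi_i$ and $\pi_0=1-\pi_{\mathcal D}=P(R=0)$. There are $E$-valued random variables $P_1,\dots,P_N$ such that conditionally on $R=i$ with $1\le i\le N$, they are independent, $P_i$ has the distribution of $S$ and $P_j$ ($j\ne i$) has the distribution of $G$; and conditionally on $R=0$ they are independent, each with the distribution of $G$. Set $\mathbf{LR}_{\mathcal D}=(LR(P_1),\dots,LR(P_N))$. *)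

theory Defs
  imports "HOL-Probability.Probability"
begin

definition pt_prob :: "'b measure \<Rightarrow> ('b \<Rightarrow> 'e) \<Rightarrow> 'e \<Rightarrow> real" where
  "pt_prob M X e = measure M {x \<in> space M. X x = e}"

definition LR :: "'b measure \<Rightarrow> ('b \<Rightarrow> 'e) \<Rightarrow> 'c measure \<Rightarrow> ('c \<Rightarrow> 'e) \<Rightarrow> 'e \<Rightarrow> real" where
  "LR Ms S Mg G e = (if pt_prob Mg G e > 0 then pt_prob Ms S e / pt_prob Mg G e else 0)"

definition cprob :: "'a measure \<Rightarrow> 'a set \<Rightarrow> 'a set \<Rightarrow> real" where
  "cprob M A B = measure M (A \<inter> B) / measure M B"

end

theory Submission
  imports Defs
begin

theorem mainTheorem2:
  fixes Ms :: "'b measure" and S :: "'b \<Rightarrow> 'e::countable"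
    and Mg :: "'c measure" and G :: "'c \<Rightarrow> 'e"
    and M :: "'a measure" and R :: "'a \<Rightarrow> nat" and P :: "nat \<Rightarrow> 'a \<Rightarrow> 'e"
    and N :: nat and r :: "nat \<Rightarrow> real" and i :: nat
  assumes "prob_space Ms" and "S \<in> measurable Ms (count_space UNIV)"
    and "prob_space Mg" and "G \<in> measurable Mg (count_space UNIV)"
    and SG: "\<And>e. pt_prob Ms S e > 0 \<Longrightarrow> pt_prob Mg G e > 0"
    and "prob_space M" and "N \<ge> 1"
    and "R \<in> measurable M (count_space UNIV)"
    and "\<And>\<omega>. \<omega> \<in> space M \<Longrightarrow> R \<omega> \<le> N"
    and "\<And>j. j \<in> {1..N} \<Longrightarrow> P j \<in> measurable M (count_space UNIV)"
    and model_D: "\<And>k (e :: nat \<Rightarrow> 'e). k \<in> {1..N} \<Longrightarrow>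
        measure M {\<omega> \<in> space M. R \<omega> = k \<and> (\<forall>j\<in>{1..N}. P j \<omega> = e j)}
        = pt_prob M R k * (pt_prob Ms S (e k) * (\<Prod>j\<in>{1..N} - {k}. pt_prob Mg G (e j)))"
    and model_0: "\<And>(e :: nat \<Rightarrow> 'e).
        measure M {\<omega> \<in> space M. R \<omega> = 0 \<and> (\<forall>j\<in>{1..N}. P j \<omega> = e j)}
        = pt_prob M R 0 * (\<Prod>j\<in>{1..N}. pt_prob Mg G (e j))"
    and pos: "measure M {\<omega> \<in> space M. \<forall>j\<in>{1..N}. LR Ms S Mg G (P j \<omega>) = r j} > 0"
    and "i \<in> {1..N}" and "0 < pt_prob M R i" and "pt_prob M R i < 1"
  shows "let B = {\<omega> \<in> space M. \<forall>j\<in>{1..N}. LR Ms S Mg G (P j \<omega>) = r j};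
             Ri = {\<omega> \<in> space M. R \<omega> = i};
             Rni = {\<omega> \<in> space M. R \<omega> \<noteq> i};
             \<pi> = pt_prob M R;
             r0 = (\<lambda>k. if k = 0 then 1 else r k)
         in cprob M Ri B / cprob M Rni B
              = r0 i * \<pi> i / (\<Sum>k\<in>{0..N} - {i}. r0 k * \<pi> k)
          \<and> ((cprob M B Rni \<noteq> 0 \<and> (\<Sum>k\<in>{1..N} - {i}. r k * \<pi> k) + \<pi> 0 \<noteq> 0) \<longrightarrow>
              cprob M B Ri / cprob M B Rni
              = r i * (1 - \<pi> i) / ((\<Sum>k\<in>{1..N} - {i}. r k * \<pi> k) + \<pi> 0))"
proof -
  interpret M: prob_space M by fact
  define B where "B = {\<omega> \<in> space M. \<forall>j\<in>{1..N}. LR Ms S Mg G (P j \<omega>) = r j}"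
  define \<pi> where "\<pi> = pt_prob M R"
  define c where "c = (\<lambda>k. (if k = 0 then 1 else r k) * \<pi> k)"
  define g where "g = (\<lambda>e::nat\<Rightarrow>'e. \<Prod>j\<in>{1..N}. pt_prob Mg G (e j))"
  define T where "T = Pi\<^sub>E {1..N} (\<lambda>j. {x. LR Ms S Mg G x = r j})"
  define X where "X = (\<lambda>k (e::nat\<Rightarrow>'e). {\<omega> \<in> space M. R \<omega> = k \<and> (\<forall>j\<in>{1..N}. P j \<omega> = e j)})"
  define A where "A = (\<lambda>k. {\<omega> \<in> space M. R \<omega> = k} \<inter> B)"
  have ppnn: "\<And>MM (X::_\<Rightarrow>'e) x. pt_prob MM X x \<ge> 0" unfolding pt_prob_def by simp
  have LRnn: "\<And>x. LR Ms S Mg G x \<ge> 0" unfolding LR_def pt_prob_def by simp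
  have "B \<noteq> {}" using pos unfolding B_def[symmetric] by auto
  then obtain \<omega>0 where w0: "\<omega>0 \<in> B" by blast
  have rnn: "r j \<ge> 0" if "j \<in> {1..N}" for j
  proof -
    have "LR Ms S Mg G (P j \<omega>0) = r j" using w0 that unfolding B_def by simp
    then show ?thesis using LRnn by metis
  qed
  have cnn: "c k \<ge> 0" if "k \<le> N" for k
  proof (cases "k = 0")
    case True then show ?thesis unfolding c_def \<pi>_def pt_prob_def by simp
  next
    case False then have "r k \<ge> 0" using rnn that by simp
    then show ?thesis using False unfolding c_def \<pi>_def pt_prob_def by simp
  qed
  have gnn: "\<And>e. g e \<ge> 0" unfolding g_def pt_prob_def by (simp add: prod_nonneg)
  have Psets: "\<And>j x. j \<in> {1..N} \<Longrightarrow> {\<omega> \<in> space M. P j \<omega> = x} \<in> sets M"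
  proof -
    fix j x assume "j \<in> {1..N}"
    then have "P j \<in> measurable M (count_space UNIV)" using assms(10) by blast
    then show "{\<omega> \<in> space M. P j \<omega> = x} \<in> sets M" by measurable
  qed
  have Rsets: "\<And>k. {\<omega> \<in> space M. R \<omega> = k} \<in> sets M"
    using assms(8) by measurable
  have Xsets: "\<And>k e. X k e \<in> sets M"
  proof -
    fix k e
    have "X k e = {\<omega> \<in> space M. R \<omega> = k} \<inter> (space M \<inter> (\<Inter>j\<in>{1..N}. {\<omega> \<in> space M. P j \<omega> = e j}))"
      unfolding X_def by auto
    also have "\<dots> \<in> sets M" using Rsets Psets by (intro sets.Int sets.finite_INT) (use assms(7) in auto)
    finally show "X k e \<in> sets M" .
  qed
  have pw: "measure M (X k e) = c k * g e" if "e \<in> T" "k \<in> {0..N}" for k e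
  proof (cases "k = 0")
    case True
    then show ?thesis using model_0[of e] unfolding X_def c_def g_def \<pi>_def by simp
  next
    case False
    then have k: "k \<in> {1..N}" using that by auto
    have ek: "LR Ms S Mg G (e k) = r k" using that(1) k unfolding T_def by auto
    have PS: "pt_prob Ms S (e k) = r k * pt_prob Mg G (e k)"
    proof (cases "pt_prob Mg G (e k) > 0")
      case True then show ?thesis using ek unfolding LR_def by (auto simp: field_simps)
    next
      case F: False
      then have "pt_prob Mg G (e k) = 0" using ppnn[of Mg G "e k"] by simp
      moreover have "pt_prob Ms S (e k) = 0" using F SG ppnn[of Ms S "e k"] by force
      ultimately show ?thesis by simp
    qed
    have "g e = pt_prob Mg G (e k) * (\<Prod>j\<in>{1..N} - {k}. pt_prob Mg G (e j))"
      unfolding g_def using k by (simp add: prod.remove)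
    then show ?thesis using model_D[OF k, of e] False unfolding X_def c_def \<pi>_def PS by simp
  qed
  have Tc: "countable T" unfolding T_def by (rule countable_PiE) auto
  have Aeq: "A k = (\<Union>e\<in>T. X k e)" for k
  proof
    show "A k \<subseteq> (\<Union>e\<in>T. X k e)"
    proof
      fix \<omega> assume w: "\<omega> \<in> A k"
      let ?e = "restrict (\<lambda>j. P j \<omega>) {1..N}"
      have "?e \<in> T" using w unfolding A_def B_def T_def by auto
      moreover have "\<omega> \<in> X k ?e" using w unfolding A_def B_def X_def by auto
      ultimately show "\<omega> \<in> (\<Union>e\<in>T. X k e)" by blast
    qed
    show "(\<Union>e\<in>T. X k e) \<subseteq> A k" unfolding A_def B_def X_def T_def by auto
  qed
  have disj: "disjoint_family_on (X k) T" for k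
    unfolding disjoint_family_on_def
  proof (intro ballI impI)
    fix e1 e2 assume e: "e1 \<in> T" "e2 \<in> T" "e1 \<noteq> e2"
    then obtain j where "j \<in> {1..N}" "e1 j \<noteq> e2 j" unfolding T_def
      by (metis PiE_ext)
    then show "X k e1 \<inter> X k e2 = {}" unfolding X_def by auto
  qed
  define q where "q = enn2real (\<integral>\<^sup>+e. ennreal (g e) \<partial>count_space T)"
  have Ak: "measure M (A k) = c k * q" if "k \<in> {0..N}" for k
  proof -
    have "emeasure M (A k) = (\<integral>\<^sup>+e. emeasure M (X k e) \<partial>count_space T)"
      unfolding Aeq by (rule emeasure_UN_countable[OF Xsets Tc disj])
    also have "\<dots> = (\<integral>\<^sup>+e. ennreal (c k) * ennreal (g e) \<partial>count_space T)"
      by (intro nn_integral_cong)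
        (use that in \<open>simp add: M.emeasure_eq_measure pw ennreal_mult cnn gnn\<close>)
    also have "\<dots> = ennreal (c k) * (\<integral>\<^sup>+e. ennreal (g e) \<partial>count_space T)"
      by (rule nn_integral_cmult) simp
    finally have "ennreal (measure M (A k)) = ennreal (c k) * (\<integral>\<^sup>+e. ennreal (g e) \<partial>count_space T)"
      unfolding M.emeasure_eq_measure .
    then have "enn2real (ennreal (measure M (A k))) = enn2real (ennreal (c k) * (\<integral>\<^sup>+e. ennreal (g e) \<partial>count_space T))"
      by simp
    then show ?thesis unfolding q_def enn2real_mult using cnn[of k] that by simp
  qed
  have Asets: "A k \<in> sets M" for k
    unfolding Aeq using Xsets Tc by (intro sets.countable_UN'') auto
  have Adisj: "disjoint_family A" unfolding disjoint_family_on_def A_def by auto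
  have sumA: "measure M (\<Union>k\<in>K. A k) = (\<Sum>k\<in>K. c k) * q" if "K \<subseteq> {0..N}" for K
  proof -
    have "finite K" using that finite_subset by blast
    then have "measure M (\<Union>k\<in>K. A k) = (\<Sum>k\<in>K. measure M (A k))"
      using Asets Adisj by (intro M.finite_measure_finite_Union) (auto simp: disjoint_family_on_def)
    also have "\<dots> = (\<Sum>k\<in>K. c k) * q" using Ak that by (auto simp: sum_distrib_right intro!: sum.cong)
    finally show ?thesis .
  qed
  have BU: "B = (\<Union>k\<in>{0..N}. A k)" unfolding A_def B_def using assms(9) by auto
  have RniB: "{\<omega> \<in> space M. R \<omega> \<noteq> i} \<inter> B = (\<Union>k\<in>{0..N}-{i}. A k)"
    unfolding A_def B_def using assms(9) by auto
  have RiB: "{\<omega> \<in> space M. R \<omega> = i} \<inter> B = A i" unfolding A_def by simp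
  have mB: "measure M B = (\<Sum>k\<in>{0..N}. c k) * q" using BU sumA by simp
  have mB0: "measure M B > 0" using pos unfolding B_def .
  then have q0: "q \<noteq> 0" using mB by auto
  have mRni: "measure M {\<omega> \<in> space M. R \<omega> \<noteq> i} = 1 - \<pi> i"
  proof -
    have "{\<omega> \<in> space M. R \<omega> \<noteq> i} = space M - {\<omega> \<in> space M. R \<omega> = i}" by auto
    then show ?thesis using M.prob_compl[OF Rsets] unfolding \<pi>_def pt_prob_def by simp
  qed
  have i: "i \<in> {0..N}" using assms(14) by auto
  have mA: "measure M (A i) = c i * q" using Ak i .
  have mN: "measure M ({\<omega> \<in> space M. R \<omega> \<noteq> i} \<inter> B) = (\<Sum>k\<in>{0..N}-{i}. c k) * q"
    using RniB sumA by simp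
  have sumc: "(\<Sum>k\<in>{0..N}-{i}. c k) = (\<Sum>k\<in>{1..N} - {i}. r k * \<pi> k) + \<pi> 0"
  proof -
    have "{0..N}-{i} = insert 0 ({1..N}-{i})" using assms(14) by auto
    then have "(\<Sum>k\<in>{0..N}-{i}. c k) = c 0 + (\<Sum>k\<in>{1..N}-{i}. c k)" by simp
    also have "(\<Sum>k\<in>{1..N}-{i}. c k) = (\<Sum>k\<in>{1..N} - {i}. r k * \<pi> k)"
      unfolding c_def by (intro sum.cong) auto
    finally show ?thesis unfolding c_def by simp
  qed
  have pii: "\<pi> i > 0" "\<pi> i < 1" using assms(15,16) unfolding \<pi>_def by auto
  have ci: "c i = r i * \<pi> i" unfolding c_def using assms(14) by auto
  show ?thesis
    unfolding Let_def B_def[symmetric] \<pi>_def[symmetric] cprob_def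
  proof (intro conjI impI)
    have "(\<Sum>k\<in>{0..N} - {i}. (if k = 0 then 1 else r k) * \<pi> k) = (\<Sum>k\<in>{0..N}-{i}. c k)"
      unfolding c_def ..
    then show "measure M ({\<omega> \<in> space M. R \<omega> = i} \<inter> B) / measure M B /
        (measure M ({\<omega> \<in> space M. R \<omega> \<noteq> i} \<inter> B) / measure M B) =
        (if i = 0 then 1 else r i) * \<pi> i / (\<Sum>k\<in>{0..N} - {i}. (if k = 0 then 1 else r k) * \<pi> k)"
      using mB0 q0 unfolding RiB mA mN c_def by (simp add: field_simps)
  next
    assume H: "measure M (B \<inter> {\<omega> \<in> space M. R \<omega> \<noteq> i}) / measure M {\<omega> \<in> space M. R \<omega> \<noteq> i} \<noteq> 0 \<and>
      (\<Sum>k\<in>{1..N} - {i}. r k * \<pi> k) + \<pi> 0 \<noteq> 0"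
    have e1: "B \<inter> {\<omega> \<in> space M. R \<omega> = i} = A i" "B \<inter> {\<omega> \<in> space M. R \<omega> \<noteq> i} = {\<omega> \<in> space M. R \<omega> \<noteq> i} \<inter> B"
      using RiB by auto
    show "measure M (B \<inter> {\<omega> \<in> space M. R \<omega> = i}) / measure M {\<omega> \<in> space M. R \<omega> = i} /
        (measure M (B \<inter> {\<omega> \<in> space M. R \<omega> \<noteq> i}) / measure M {\<omega> \<in> space M. R \<omega> \<noteq> i}) =
        r i * (1 - \<pi> i) / ((\<Sum>k\<in>{1..N} - {i}. r k * \<pi> k) + \<pi> 0)"
    proof -
      have alg: "\<And>a p s qq::real. p > 0 \<Longrightarrow> p < 1 \<Longrightarrow> s \<noteq> 0 \<Longrightarrow> qq \<noteq> 0 \<Longrightarrow>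
          (a * p * qq / p) / (s * qq / (1 - p)) = a * (1 - p) / s"
        by (simp add: field_simps)
      have "measure M {\<omega> \<in> space M. R \<omega> = i} = \<pi> i" unfolding \<pi>_def pt_prob_def ..
      then show ?thesis unfolding e1 mA mN mRni sumc ci using H pii q0 alg by simp
    qed
  qed
qed

end
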